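(* Let $X$ be a strong locally super-compact $L$-topological space. Then $({\rm pt}_L\mathcal O(X),{\rm sub}_{\mathcal O(X)})$ is an algebraic $L$-dcpo.
   Context: $L$ is a frame with implication $\to$. $L$-subsets: maps to $L$; nonempty: $\bigvee A=1$; ${\rm sub}_X(A,B)=\bigwedge_xA(x)\to B(x)$. $L$-topology: $\mathcal O(X)\subseteq L^X$ closed under finite meets and arbitrary joins containing all constants $a_X$. Base: $\mathcal B\subseteq\mathcal O(X)$ with $A=\bigvee_{B\in\mathcal B}{\rm sub}_X(B,A)\wedge B$ for each open $A$. Super-compact: nonempty $A$ with ${\rm sub}_X(A,\bigvee_iV_i)=\bigvee_i{\rm sub}_X(A,V_i)$ for all families of open $V_i$. Strong locally super-compact: has a base of super-compact open sets. A point of $\mathcal O(X)$: $p:\mathcal O(X)\to L$ with $p(A\wedge B)=p(A)\wedge p(B)$, $p(\bigvee_iA_i)=\bigvee_ip(A_i)$, $p(\lambda_X)=\lambda$; ${\rm pt}_L\mathcal O(X)$ the set of points, with ${\rm sub}_{\mathcal O(X)}(p,q)=\bigwedge_{A\in\mathcal O(X)}p(A)\to q(A)$. For an $L$-ordered set $(P,e)$: ${\downarrow}y(x)=e(x,y)$; $\sqcup A=x$ iff $e(x,y)={\rm sub}_P(A,{\downarrow}y)$ for all $y$; directed: nonempty with $D(x)\wedge D(y)\le\bigvee_zD(z)\wedge e(x,z)\wedge e(y,z)$; ideal: directed lower set; $L$-dcpo: all directed $L$-subsets have suprema; ${\Downarrow}x(y)=\bigwedge\{e(x,\sqcup I)\to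 I(y):I\text{ ideal with a supremum}\}$; compact: ${\Downarrow}x(x)=1$; $K(P)$ compact elements; $k(x)(y)=e(y,x)$ for $y\in K(P)$, $0$ otherwise; algebraic $L$-dcpo: $L$-dcpo with each $k(x)$ directed and $\sqcup k(x)=x$. *)

theory Defs
  imports Main
begin

definition frame :: "'l::complete_lattice itself \<Rightarrow> bool" where
  "frame _ \<longleftrightarrow> (\<forall>(a::'l) B. inf a (Sup B) = (SUP b\<in>B. inf a b))"

definition himp :: "'l::complete_lattice \<Rightarrow> 'l \<Rightarrow> 'l" where
  "himp a b = Sup {c. inf c a \<le> b}"

definition subL :: "('x \<Rightarrow> 'l::complete_lattice) \<Rightarrow> ('x \<Rightarrow> 'l) \<Rightarrow> 'l" where
  "subL A B = (INF x. himp (A x) (B x))"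

definition nonemptyL :: "('x \<Rightarrow> 'l::complete_lattice) \<Rightarrow> bool" where
  "nonemptyL A \<longleftrightarrow> (SUP x. A x) = top"

definition L_topology :: "('x \<Rightarrow> 'l::complete_lattice) set \<Rightarrow> bool" where
  "L_topology OX \<longleftrightarrow>
     (\<forall>A\<in>OX. \<forall>B\<in>OX. inf A B \<in> OX) \<and>
     (\<forall>S. S \<subseteq> OX \<longrightarrow> Sup S \<in> OX) \<and>
     (\<forall>a. (\<lambda>_. a) \<in> OX)"

definition is_base :: "('x \<Rightarrow> 'l::complete_lattice) set \<Rightarrow> ('x \<Rightarrow> 'l) set \<Rightarrow> bool" where
  "is_base OX Bs \<longleftrightarrow> Bs \<subseteq> OX \<and>
     (\<forall>A\<in>OX. \<forall>x. A x = (SUP B\<in>Bs. inf (subL B A) (B x)))"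

definition super_compact :: "('x \<Rightarrow> 'l::complete_lattice) set \<Rightarrow> ('x \<Rightarrow> 'l) \<Rightarrow> bool" where
  "super_compact OX A \<longleftrightarrow> nonemptyL A \<and>
     (\<forall>V. V \<subseteq> OX \<longrightarrow> subL A (Sup V) = (SUP W\<in>V. subL A W))"

definition strong_locally_super_compact :: "('x \<Rightarrow> 'l::complete_lattice) set \<Rightarrow> bool" where
  "strong_locally_super_compact OX \<longleftrightarrow>
     (\<exists>Bs. is_base OX Bs \<and> (\<forall>B\<in>Bs. super_compact OX B))"

text \<open>Points are maps OX(X) \<rightarrow> L; to obtain a set of HOL functions we take them
  extensional, i.e. equal to bot outside OX(X).\<close>

definition is_point :: "('x \<Rightarrow> 'l::complete_lattice) set \<Rightarrow> (('x \<Rightarrow> 'l) \<Rightarrow> 'l) \<Rightarrow> bool" where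
  "is_point OX p \<longleftrightarrow>
     (\<forall>A. A \<notin> OX \<longrightarrow> p A = bot) \<and>
     (\<forall>A\<in>OX. \<forall>B\<in>OX. p (inf A B) = inf (p A) (p B)) \<and>
     (\<forall>S. S \<subseteq> OX \<longrightarrow> p (Sup S) = (SUP A\<in>S. p A)) \<and>
     (\<forall>a. p (\<lambda>_. a) = a)"

definition ptL :: "('x \<Rightarrow> 'l::complete_lattice) set \<Rightarrow> (('x \<Rightarrow> 'l) \<Rightarrow> 'l) set" where
  "ptL OX = {p. is_point OX p}"

definition subO :: "('x \<Rightarrow> 'l::complete_lattice) set \<Rightarrow> (('x \<Rightarrow> 'l) \<Rightarrow> 'l) \<Rightarrow> (('x \<Rightarrow> 'l) \<Rightarrow> 'l) \<Rightarrow> 'l" where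
  "subO OX p q = (INF A\<in>OX. himp (p A) (q A))"

text \<open>L-subsets of P are maps 'p \<Rightarrow> L vanishing outside P.\<close>

definition Lsubset_of :: "'p set \<Rightarrow> ('p \<Rightarrow> 'l::complete_lattice) \<Rightarrow> bool" where
  "Lsubset_of P A \<longleftrightarrow> (\<forall>x. x \<notin> P \<longrightarrow> A x = bot)"

definition subP :: "'p set \<Rightarrow> ('p \<Rightarrow> 'l::complete_lattice) \<Rightarrow> ('p \<Rightarrow> 'l) \<Rightarrow> 'l" where
  "subP P A B = (INF x\<in>P. himp (A x) (B x))"

definition L_order :: "'p set \<Rightarrow> ('p \<Rightarrow> 'p \<Rightarrow> 'l::complete_lattice) \<Rightarrow> bool" where
  "L_order P e \<longleftrightarrow>
     (\<forall>x\<in>P. e x x = top) \<and>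
     (\<forall>x\<in>P. \<forall>y\<in>P. \<forall>z\<in>P. inf (e x y) (e y z) \<le> e x z) \<and>
     (\<forall>x\<in>P. \<forall>y\<in>P. e x y = top \<and> e y x = top \<longrightarrow> x = y)"

definition down :: "('p \<Rightarrow> 'p \<Rightarrow> 'l::complete_lattice) \<Rightarrow> 'p \<Rightarrow> 'p \<Rightarrow> 'l" where
  "down e y = (\<lambda>x. e x y)"

definition is_sup :: "'p set \<Rightarrow> ('p \<Rightarrow> 'p \<Rightarrow> 'l::complete_lattice) \<Rightarrow> ('p \<Rightarrow> 'l) \<Rightarrow> 'p \<Rightarrow> bool" where
  "is_sup P e A x \<longleftrightarrow> x \<in> P \<and> (\<forall>y\<in>P. e x y = subP P A (down e y))"

definition directed :: "'p set \<Rightarrow> ('p \<Rightarrow> 'p \<Rightarrow> 'l::complete_lattice) \<Rightarrow> ('p \<Rightarrow> 'l) \<Rightarrow> bool" where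
  "directed P e D \<longleftrightarrow> (SUP x\<in>P. D x) = top \<and>
     (\<forall>x\<in>P. \<forall>y\<in>P. inf (D x) (D y) \<le> (SUP z\<in>P. inf (D z) (inf (e x z) (e y z))))"

definition lower_set :: "'p set \<Rightarrow> ('p \<Rightarrow> 'p \<Rightarrow> 'l::complete_lattice) \<Rightarrow> ('p \<Rightarrow> 'l) \<Rightarrow> bool" where
  "lower_set P e A \<longleftrightarrow> (\<forall>x\<in>P. \<forall>y\<in>P. inf (A x) (e y x) \<le> A y)"

definition ideal :: "'p set \<Rightarrow> ('p \<Rightarrow> 'p \<Rightarrow> 'l::complete_lattice) \<Rightarrow> ('p \<Rightarrow> 'l) \<Rightarrow> bool" where
  "ideal P e I \<longleftrightarrow> directed P e I \<and> lower_set P e I"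

definition L_dcpo :: "'p set \<Rightarrow> ('p \<Rightarrow> 'p \<Rightarrow> 'l::complete_lattice) \<Rightarrow> bool" where
  "L_dcpo P e \<longleftrightarrow> L_order P e \<and>
     (\<forall>D. Lsubset_of P D \<and> directed P e D \<longrightarrow> (\<exists>x. is_sup P e D x))"

definition wbelow :: "'p set \<Rightarrow> ('p \<Rightarrow> 'p \<Rightarrow> 'l::complete_lattice) \<Rightarrow> 'p \<Rightarrow> 'p \<Rightarrow> 'l" where
  "wbelow P e x y = (INF (I, s)\<in>{(I, s). Lsubset_of P I \<and> ideal P e I \<and> is_sup P e I s}.
                       himp (e x s) (I y))"

definition compact_elems :: "'p set \<Rightarrow> ('p \<Rightarrow> 'p \<Rightarrow> 'l::complete_lattice) \<Rightarrow> 'p set" where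
  "compact_elems P e = {x\<in>P. wbelow P e x x = top}"

definition kset :: "'p set \<Rightarrow> ('p \<Rightarrow> 'p \<Rightarrow> 'l::complete_lattice) \<Rightarrow> 'p \<Rightarrow> 'p \<Rightarrow> 'l" where
  "kset P e x = (\<lambda>y. if y \<in> compact_elems P e then e y x else bot)"

definition algebraic_L_dcpo :: "'p set \<Rightarrow> ('p \<Rightarrow> 'p \<Rightarrow> 'l::complete_lattice) \<Rightarrow> bool" where
  "algebraic_L_dcpo P e \<longleftrightarrow> L_dcpo P e \<and>
     (\<forall>x\<in>P. directed P e (kset P e x) \<and> is_sup P e (kset P e x) x)"

end

theory Submission
  imports Defs
begin

lemma eq_by_le:
  fixes x y :: "'a::order"
  assumes "\<And>c. c \<le> x \<longleftrightarrow> c \<le> y" shows "x = y"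
  using assms[of x] assms[of y] by (auto intro: antisym)

lemma fr_inf_SUP:
  assumes "frame TYPE('l::complete_lattice)"
  shows "inf (a::'l) (SUP i\<in>I. f i) = (SUP i\<in>I. inf a (f i))"
  using assms unfolding frame_def by (simp add: image_image)

lemma fr_SUP_inf:
  assumes "frame TYPE('l::complete_lattice)"
  shows "inf (SUP i\<in>I. f i) (a::'l) = (SUP i\<in>I. inf (f i) a)"
  using fr_inf_SUP[OF assms] by (simp add: inf_commute)

lemma himp_adj:
  assumes fr: "frame TYPE('l::complete_lattice)"
  shows "(c::'l) \<le> himp a b \<longleftrightarrow> inf c a \<le> b"
proof
  assume "c \<le> himp a b"
  hence "inf c a \<le> inf (himp a b) a" by (rule inf_mono) simp
  also have "\<dots> = (SUP d\<in>{d. inf d a \<le> b}. inf a d)"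
    unfolding himp_def using fr_SUP_inf[OF fr, of id "{d. inf d a \<le> b}" a]
    by (simp add: inf_commute)
  also have "\<dots> \<le> b" by (auto intro: SUP_least simp: inf_commute)
  finally show "inf c a \<le> b" .
next
  assume "inf c a \<le> b" thus "c \<le> himp a b" unfolding himp_def by (auto intro: Sup_upper)
qed

locale ltop =
  fixes OX :: "('x \<Rightarrow> 'l::complete_lattice) set"
  assumes fr: "frame TYPE('l)" and topo: "L_topology OX"
begin

lemma adj: "(c::'l) \<le> himp a b \<longleftrightarrow> inf c a \<le> b" using himp_adj[OF fr] .
lemma iSUP: "inf (a::'l) (SUP i\<in>I. f i) = (SUP i\<in>I. inf a (f i))" using fr_inf_SUP[OF fr] .
lemma SUPi: "inf (SUP i\<in>I. f i) (a::'l) = (SUP i\<in>I. inf (f i) a)" using fr_SUP_inf[OF fr] .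

lemma top_le_himp: "top \<le> himp (a::'l) b \<longleftrightarrow> a \<le> b" by (simp add: adj)
lemma himp_top: "himp top (b::'l) = b" by (rule eq_by_le) (simp add: adj)

lemma const_in: "(\<lambda>_. a) \<in> OX" using topo unfolding L_topology_def by blast
lemma inf_in: "A\<in>OX \<Longrightarrow> B\<in>OX \<Longrightarrow> inf A B \<in> OX" using topo unfolding L_topology_def by blast
lemma Sup_in: "S \<subseteq> OX \<Longrightarrow> Sup S \<in> OX" using topo unfolding L_topology_def by blast
lemma cinf_eq: "(\<lambda>x. inf c (B x)) = inf (\<lambda>_. c) B" by (simp add: inf_fun_def)
lemma cinf_in: "B\<in>OX \<Longrightarrow> (\<lambda>x. inf c (B x)) \<in> OX"
proof -
  assume B: "B \<in> OX"
  have "inf (\<lambda>_. c) B \<in> OX" by (rule inf_in[OF const_in B])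
  thus ?thesis by (simp only: inf_fun_def)
qed

lemma e_ge_iff: "c \<le> subO OX p q \<longleftrightarrow> (\<forall>A\<in>OX. inf c (p A) \<le> q A)"
  unfolding subO_def by (simp add: le_INF_iff adj)
lemma e_app: "A\<in>OX \<Longrightarrow> inf (subO OX p q) (p A) \<le> q A" using e_ge_iff by blast
lemma subL_ge_iff: "(c::'l) \<le> subL A (B::'z \<Rightarrow> 'l) \<longleftrightarrow> (\<forall>x. inf c (A x) \<le> B x)"
  unfolding subL_def by (simp add: le_INF_iff adj)
lemma subP_ge_iff: "(c::'l) \<le> subP P A (B::'z \<Rightarrow> 'l) \<longleftrightarrow> (\<forall>x\<in>P. inf c (A x) \<le> B x)"
  unfolding subP_def by (simp add: le_INF_iff adj)

lemma e_refl: "subO OX p p = top" by (rule top_le) (simp add: e_ge_iff)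
lemma e_trans: "inf (subO OX p q) (subO OX q r) \<le> subO OX p r"
  unfolding e_ge_iff
proof
  fix A assume A: "A \<in> OX"
  have "inf (inf (subO OX p q) (subO OX q r)) (p A) \<le> inf (subO OX q r) (inf (subO OX p q) (p A))"
    by (simp add: inf.coboundedI1 inf.coboundedI2)
  also have "\<dots> \<le> inf (subO OX q r) (q A)" using e_app[OF A, of p q] by (simp add: inf.coboundedI2)
  also have "\<dots> \<le> r A" using e_app[OF A] .
  finally show "inf (inf (subO OX p q) (subO OX q r)) (p A) \<le> r A" .
qed

lemma pt_meet: "is_point OX p \<Longrightarrow> A\<in>OX \<Longrightarrow> B\<in>OX \<Longrightarrow> p (inf A B) = inf (p A) (p B)"
  unfolding is_point_def by blast
lemma pt_Sup: "is_point OX p \<Longrightarrow> S \<subseteq> OX \<Longrightarrow> p (Sup S) = (SUP A\<in>S. p A)"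
  unfolding is_point_def by blast
lemma pt_const: "is_point OX p \<Longrightarrow> p (\<lambda>_. a) = a"
  unfolding is_point_def by blast
lemma pt_out: "is_point OX p \<Longrightarrow> A \<notin> OX \<Longrightarrow> p A = bot"
  unfolding is_point_def by blast

lemma pt_mono:
  assumes p: "is_point OX p" and A: "A\<in>OX" "A'\<in>OX" "A \<le> A'"
  shows "p A \<le> p A'"
proof -
  have "Sup {A, A'} = A'" using A by (simp add: sup_absorb2)
  hence "p A' = (SUP W\<in>{A,A'}. p W)" using pt_Sup[OF p, of "{A,A'}"] A by simp
  hence "p A' = sup (p A) (p A')" by simp
  thus ?thesis by (metis sup.cobounded1)
qed

lemma pt_cinf: "is_point OX p \<Longrightarrow> B\<in>OX \<Longrightarrow> p (\<lambda>x. inf c (B x)) = inf c (p B)"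
proof -
  assume p: "is_point OX p" and B: "B \<in> OX"
  show ?thesis using pt_meet[OF p const_in B, of c] pt_const[OF p, of c] by (simp add: inf_fun_def)
qed

lemma pt_sub:
  assumes p: "is_point OX p" and A: "A\<in>OX" and B: "B\<in>OX"
  shows "inf (subL B A) (p B) \<le> p A"
proof -
  have "(\<lambda>x. inf (subL B A) (B x)) \<le> A"
    using subL_ge_iff[of "subL B A" B A] by (simp add: le_fun_def)
  from pt_mono[OF p cinf_in[OF B] A this] show ?thesis by (simp add: pt_cinf[OF p B])
qed

lemma e_antisym:
  assumes p: "is_point OX p" and q: "is_point OX q"
    and "subO OX p q = top" "subO OX q p = top"
  shows "p = q"
proof
  fix A show "p A = q A"
  proof (cases "A \<in> OX")
    case True
    have "top \<le> subO OX p q" "top \<le> subO OX q p" using assms by simp_all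
    then show ?thesis using True unfolding e_ge_iff by (auto intro: antisym)
  next
    case False thus ?thesis using pt_out[OF p False] pt_out[OF q False] by simp
  qed
qed

definition supD :: "((('x \<Rightarrow> 'l) \<Rightarrow> 'l) \<Rightarrow> 'l) \<Rightarrow> ('x \<Rightarrow> 'l) \<Rightarrow> 'l" where
  "supD D = (\<lambda>A. if A \<in> OX then (SUP p\<in>ptL OX. inf (D p) (p A)) else bot)"

lemma ptL_iff: "p \<in> ptL OX \<longleftrightarrow> is_point OX p" by (simp add: ptL_def)

lemma supD_point:
  assumes dir: "directed (ptL OX) (subO OX) D"
  shows "is_point OX (supD D)"
  unfolding is_point_def
proof (intro conjI allI ballI impI)
  fix A assume "A \<notin> OX" thus "supD D A = bot" by (simp add: supD_def)
next
  fix A B assume A: "A \<in> OX" and B: "B \<in> OX"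
  have eq: "supD D (inf A B) = (SUP p\<in>ptL OX. inf (D p) (inf (p A) (p B)))"
    using A B by (simp add: supD_def inf_in ptL_iff pt_meet)
  show "supD D (inf A B) = inf (supD D A) (supD D B)"
  proof (rule antisym)
    show "supD D (inf A B) \<le> inf (supD D A) (supD D B)"
      unfolding eq using A B
      by (auto simp: supD_def intro!: SUP_least le_infI SUP_upper2 inf_mono)
  next
    have "inf (supD D A) (supD D B) =
       (SUP p\<in>ptL OX. SUP q\<in>ptL OX. inf (inf (D p) (p A)) (inf (D q) (q B)))"
      using A B by (simp add: supD_def iSUP SUPi) (rule SUP_commute)
    also have "\<dots> \<le> (SUP p\<in>ptL OX. inf (D p) (inf (p A) (p B)))"
    proof (intro SUP_least)
      fix p q assume p: "p \<in> ptL OX" and q: "q \<in> ptL OX"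
      have "inf (inf (D p) (p A)) (inf (D q) (q B)) = inf (inf (D p) (D q)) (inf (p A) (q B))"
        by (simp add: inf_aci)
      also have "\<dots> \<le> inf (SUP z\<in>ptL OX. inf (D z) (inf (subO OX p z) (subO OX q z))) (inf (p A) (q B))"
      proof (rule inf_mono)
        show "inf (D p) (D q) \<le> (SUP z\<in>ptL OX. inf (D z) (inf (subO OX p z) (subO OX q z)))"
          using dir p q unfolding directed_def by blast
      qed simp
      also have "\<dots> = (SUP z\<in>ptL OX. inf (inf (D z) (inf (subO OX p z) (subO OX q z))) (inf (p A) (q B)))"
        by (simp add: SUPi)
      also have "\<dots> \<le> (SUP z\<in>ptL OX. inf (D z) (inf (z A) (z B)))"
      proof (rule SUP_mono)
        fix z assume z: "z \<in> ptL OX"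
        have "inf (subO OX p z) (p A) \<le> z A" using e_app[OF A] .
        moreover have "inf (subO OX q z) (q B) \<le> z B" using e_app[OF B] .
        ultimately have "inf (inf (D z) (inf (subO OX p z) (subO OX q z))) (inf (p A) (q B))
             \<le> inf (D z) (inf (z A) (z B))"
          by (smt (verit) inf.bounded_iff inf.cobounded1 inf.cobounded2 order_trans)
        thus "\<exists>m\<in>ptL OX. inf (inf (D z) (inf (subO OX p z) (subO OX q z))) (inf (p A) (q B))
             \<le> inf (D m) (inf (m A) (m B))" using z by blast
      qed
      finally show "inf (inf (D p) (p A)) (inf (D q) (q B)) \<le> (SUP p\<in>ptL OX. inf (D p) (inf (p A) (p B)))" .
    qed
    finally show "inf (supD D A) (supD D B) \<le> supD D (inf A B)" unfolding eq .
  qed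
next
  fix S :: "('x \<Rightarrow> 'l) set" assume S: "S \<subseteq> OX"
  have "supD D (Sup S) = (SUP p\<in>ptL OX. SUP A\<in>S. inf (D p) (p A))"
    using S by (simp add: supD_def Sup_in ptL_iff pt_Sup iSUP del: Sup_apply)
  also have "\<dots> = (SUP A\<in>S. SUP p\<in>ptL OX. inf (D p) (p A))" by (rule SUP_commute)
  also have "\<dots> = (SUP A\<in>S. supD D A)" using S by (intro SUP_cong) (auto simp: supD_def)
  finally show "supD D (Sup S) = (SUP A\<in>S. supD D A)" .
next
  fix a :: 'l
  have "supD D (\<lambda>_. a) = (SUP p\<in>ptL OX. inf (D p) a)"
    by (simp add: supD_def const_in ptL_iff pt_const)
  also have "\<dots> = inf (SUP p\<in>ptL OX. D p) a" by (simp add: SUPi)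
  also have "\<dots> = a" using dir unfolding directed_def by simp
  finally show "supD D (\<lambda>_. a) = a" .
qed

lemma supD_sup:
  assumes dir: "directed (ptL OX) (subO OX) D"
  shows "is_sup (ptL OX) (subO OX) D (supD D)"
  unfolding is_sup_def
proof (intro conjI ballI)
  show "supD D \<in> ptL OX" using supD_point[OF dir] by (simp add: ptL_iff)
next
  fix y assume y: "y \<in> ptL OX"
  show "subO OX (supD D) y = subP (ptL OX) D (down (subO OX) y)"
  proof (rule eq_by_le)
    fix c :: 'l
    have "c \<le> subO OX (supD D) y \<longleftrightarrow> (\<forall>A\<in>OX. \<forall>p\<in>ptL OX. inf c (inf (D p) (p A)) \<le> y A)"
      by (simp add: e_ge_iff supD_def iSUP SUP_le_iff)
    also have "\<dots> \<longleftrightarrow> (\<forall>p\<in>ptL OX. \<forall>A\<in>OX. inf (inf c (D p)) (p A) \<le> y A)"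
      by (auto simp: inf_assoc)
    also have "\<dots> \<longleftrightarrow> c \<le> subP (ptL OX) D (down (subO OX) y)"
      by (simp add: subP_ge_iff down_def e_ge_iff)
    finally show "c \<le> subO OX (supD D) y \<longleftrightarrow> c \<le> subP (ptL OX) D (down (subO OX) y)" .
  qed
qed

lemma sup_unique:
  assumes s: "is_sup (ptL OX) (subO OX) D s" and t: "is_sup (ptL OX) (subO OX) D t"
  shows "s = t"
proof -
  have sP: "s \<in> ptL OX" and tP: "t \<in> ptL OX" using s t unfolding is_sup_def by auto
  have "subO OX t s = subP (ptL OX) D (down (subO OX) s)" using t sP unfolding is_sup_def by auto
  also have "\<dots> = subO OX s s" using s sP unfolding is_sup_def by auto
  finally have 1: "subO OX t s = top" by (simp add: e_refl)
  have "subO OX s t = subP (ptL OX) D (down (subO OX) t)" using s tP unfolding is_sup_def by auto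
  also have "\<dots> = subO OX t t" using t tP unfolding is_sup_def by auto
  finally have 2: "subO OX s t = top" by (simp add: e_refl)
  show ?thesis using e_antisym 1 2 sP tP by (simp add: ptL_iff)
qed

lemma L_order_pt: "L_order (ptL OX) (subO OX)"
  unfolding L_order_def using e_refl e_trans e_antisym by (auto simp: ptL_iff)

lemma L_dcpo_pt: "L_dcpo (ptL OX) (subO OX)"
  unfolding L_dcpo_def using L_order_pt supD_sup by blast

end

locale slsc = ltop OX for OX :: "('x \<Rightarrow> 'l::complete_lattice) set" +
  fixes Bs :: "('x \<Rightarrow> 'l) set"
  assumes base: "is_base OX Bs" and sc: "\<forall>B\<in>Bs. super_compact OX B"
begin

lemma Bs_sub: "B \<in> Bs \<Longrightarrow> B \<in> OX" using base unfolding is_base_def by blast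

lemma decomp: "A \<in> OX \<Longrightarrow> A = Sup ((\<lambda>B x. inf (subL B A) (B x)) ` Bs)"
  using base unfolding is_base_def by (auto simp: image_image)

lemma pt_base:
  assumes p: "is_point OX p" and A: "A \<in> OX"
  shows "p A = (SUP B\<in>Bs. inf (subL B A) (p B))"
proof -
  have sub: "(\<lambda>B x. inf (subL B A) (B x)) ` Bs \<subseteq> OX" using Bs_sub cinf_in by auto
  have "p A = p (Sup ((\<lambda>B x. inf (subL B A) (B x)) ` Bs))" using decomp[OF A] by simp
  also have "\<dots> = (SUP B\<in>Bs. p (\<lambda>x. inf (subL B A) (B x)))"
    using pt_Sup[OF p sub] by (simp add: image_image del: Sup_apply)
  also have "\<dots> = (SUP B\<in>Bs. inf (subL B A) (p B))"
    using pt_cinf[OF p] Bs_sub by simp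
  finally show ?thesis .
qed

lemma subL_top: "subL (B::'x \<Rightarrow> 'l) (\<lambda>_. top) = top" by (rule top_le) (simp add: subL_ge_iff)

lemma pt_top: "is_point OX p \<Longrightarrow> (SUP B\<in>Bs. p B) = top"
  using pt_base[of p "\<lambda>_. top"] by (simp add: const_in subL_top pt_const)

definition ptB :: "('x \<Rightarrow> 'l) \<Rightarrow> ('x \<Rightarrow> 'l) \<Rightarrow> 'l" where
  "ptB B = (\<lambda>A. if A \<in> OX then subL B A else bot)"

lemma subL_inf: "subL (B::'x \<Rightarrow> 'l) (inf A A') = inf (subL B A) (subL B A')"
  by (rule eq_by_le) (auto simp: subL_ge_iff)

lemma subL_const: "nonemptyL B \<Longrightarrow> subL (B::'x \<Rightarrow> 'l) (\<lambda>_. a) = a"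
proof (rule eq_by_le)
  fix c assume ne: "nonemptyL B"
  have "c \<le> subL B (\<lambda>_. a) \<longleftrightarrow> (SUP x. inf c (B x)) \<le> a" by (simp add: subL_ge_iff SUP_le_iff)
  also have "\<dots> \<longleftrightarrow> c \<le> a" using ne unfolding nonemptyL_def by (simp add: iSUP[symmetric])
  finally show "c \<le> subL B (\<lambda>_. a) \<longleftrightarrow> c \<le> a" .
qed

lemma ptB_app: "A \<in> OX \<Longrightarrow> ptB B A = subL B A" by (simp add: ptB_def)

lemma ptB_point: assumes B: "B \<in> Bs" shows "is_point OX (ptB B)"
  unfolding is_point_def
proof (intro conjI allI ballI impI)
  fix A assume "A \<notin> OX" thus "ptB B A = bot" by (simp add: ptB_def)
next
  fix A A' assume "A \<in> OX" "A' \<in> OX"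
  thus "ptB B (inf A A') = inf (ptB B A) (ptB B A')" by (simp add: ptB_def inf_in subL_inf)
next
  fix S assume S: "S \<subseteq> OX"
  have "ptB B (Sup S) = subL B (Sup S)" using S by (simp add: ptB_def Sup_in)
  also have "\<dots> = (SUP W\<in>S. subL B W)" using sc B S unfolding super_compact_def by blast
  also have "\<dots> = (SUP W\<in>S. ptB B W)" using S by (intro SUP_cong) (auto simp: ptB_def)
  finally show "ptB B (Sup S) = (SUP W\<in>S. ptB B W)" .
next
  fix a
  show "ptB B (\<lambda>_. a) = a" using sc B by (simp add: ptB_def const_in subL_const super_compact_def)
qed

lemma subL_refl: "subL (B::'x \<Rightarrow> 'l) B = top" by (rule top_le) (simp add: subL_ge_iff)

lemma e_ptB:
  assumes B: "B \<in> Bs" and q: "is_point OX q"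
  shows "subO OX (ptB B) q = q B"
proof (rule antisym)
  have "inf (subO OX (ptB B) q) (ptB B B) \<le> q B" using e_app[OF Bs_sub[OF B]] .
  thus "subO OX (ptB B) q \<le> q B" using Bs_sub[OF B] by (simp add: ptB_app subL_refl)
next
  show "q B \<le> subO OX (ptB B) q"
    unfolding e_ge_iff using pt_sub[OF q _ Bs_sub[OF B]] by (simp add: ptB_app inf_commute)
qed

lemma ptB_in: "B \<in> Bs \<Longrightarrow> ptB B \<in> ptL OX" using ptB_point by (simp add: ptL_iff)

lemma ptB_compact:
  assumes B: "B \<in> Bs"
  shows "ptB B \<in> compact_elems (ptL OX) (subO OX)"
  unfolding compact_elems_def wbelow_def
proof (intro CollectI conjI)
  show "ptB B \<in> ptL OX" using ptB_in[OF B] .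
  show "(INF (I, s)\<in>{(I, s). Lsubset_of (ptL OX) I \<and> ideal (ptL OX) (subO OX) I \<and> is_sup (ptL OX) (subO OX) I s}.
         himp (subO OX (ptB B) s) (I (ptB B))) = top"
  proof (rule top_le, rule INF_greatest, clarify)
    fix I s assume I: "ideal (ptL OX) (subO OX) I" and s: "is_sup (ptL OX) (subO OX) I s"
    have dir: "directed (ptL OX) (subO OX) I" using I unfolding ideal_def by simp
    have low: "lower_set (ptL OX) (subO OX) I" using I unfolding ideal_def by simp
    have seq: "s = supD I" using sup_unique[OF s supD_sup[OF dir]] .
    have sP: "is_point OX s" using s unfolding is_sup_def by (simp add: ptL_iff)
    have "subO OX (ptB B) s = s B" using e_ptB[OF B sP] .
    also have "\<dots> = (SUP p\<in>ptL OX. inf (I p) (p B))" using seq Bs_sub[OF B] by (simp add: supD_def)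
    also have "\<dots> \<le> I (ptB B)"
    proof (rule SUP_least)
      fix p assume p: "p \<in> ptL OX"
      have "inf (I p) (subO OX (ptB B) p) \<le> I (ptB B)"
        using low p ptB_in[OF B] unfolding lower_set_def by blast
      thus "inf (I p) (p B) \<le> I (ptB B)" using e_ptB[OF B] p by (simp add: ptL_iff)
    qed
    finally show "top \<le> himp (subO OX (ptB B) s) (I (ptB B))" by (simp add: top_le_himp)
  qed
qed

definition J :: "(('x \<Rightarrow> 'l) \<Rightarrow> 'l) \<Rightarrow> (('x \<Rightarrow> 'l) \<Rightarrow> 'l) \<Rightarrow> 'l" where
  "J p = (\<lambda>z. if z \<in> ptL OX then (SUP B\<in>Bs. inf (p B) (subO OX z (ptB B))) else bot)"

lemma J_ptB: "B \<in> Bs \<Longrightarrow> p B \<le> J p (ptB B)"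
  unfolding J_def using ptB_in[of B] by (auto simp: e_refl intro: SUP_upper2)

lemma inf_BC_split:
  assumes p: "is_point OX p" and B: "B \<in> Bs" and C: "C \<in> Bs"
  shows "inf (p B) (p C) = (SUP D\<in>Bs. inf (inf (subL D B) (subL D C)) (p D))"
proof -
  have "inf (p B) (p C) = p (inf B C)" using pt_meet[OF p Bs_sub[OF B] Bs_sub[OF C]] by simp
  also have "\<dots> = (SUP D\<in>Bs. inf (subL D (inf B C)) (p D))"
    using pt_base[OF p inf_in[OF Bs_sub[OF B] Bs_sub[OF C]]] .
  finally show ?thesis by (simp add: subL_inf)
qed

lemma e_ptB_ptB: "B \<in> Bs \<Longrightarrow> D \<in> Bs \<Longrightarrow> subO OX (ptB B) (ptB D) = subL D B"
  using e_ptB[OF _ ptB_point] Bs_sub by (simp add: ptB_app)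

lemma J_props:
  assumes p: "is_point OX p"
  shows "Lsubset_of (ptL OX) (J p) \<and> ideal (ptL OX) (subO OX) (J p) \<and> is_sup (ptL OX) (subO OX) (J p) p"
proof (intro conjI)
  show "Lsubset_of (ptL OX) (J p)" unfolding Lsubset_of_def J_def by simp
  have dir1: "(SUP z\<in>ptL OX. J p z) = top"
  proof (rule top_le)
    have "top = (SUP B\<in>Bs. p B)" using pt_top[OF p] by simp
    also have "\<dots> \<le> (SUP z\<in>ptL OX. J p z)"
      by (rule SUP_mono) (use J_ptB ptB_in in blast)
    finally show "top \<le> (SUP z\<in>ptL OX. J p z)" .
  qed
  have dir2: "inf (J p z) (J p w) \<le> (SUP v\<in>ptL OX. inf (J p v) (inf (subO OX z v) (subO OX w v)))"
    if z: "z \<in> ptL OX" and w: "w \<in> ptL OX" for z w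
  proof -
    have "inf (J p z) (J p w) = (SUP B\<in>Bs. SUP C\<in>Bs. inf (inf (p B) (subO OX z (ptB B))) (inf (p C) (subO OX w (ptB C))))"
      using z w by (simp add: J_def iSUP SUPi) (rule SUP_commute)
    also have "\<dots> \<le> (SUP v\<in>ptL OX. inf (J p v) (inf (subO OX z v) (subO OX w v)))"
    proof (intro SUP_least)
      fix B C assume B: "B \<in> Bs" and C: "C \<in> Bs"
      have "inf (inf (p B) (subO OX z (ptB B))) (inf (p C) (subO OX w (ptB C)))
          = inf (inf (p B) (p C)) (inf (subO OX z (ptB B)) (subO OX w (ptB C)))" by (simp add: inf_aci)
      also have "\<dots> = (SUP D\<in>Bs. inf (inf (inf (subL D B) (subL D C)) (p D)) (inf (subO OX z (ptB B)) (subO OX w (ptB C))))"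
        by (simp add: inf_BC_split[OF p B C] SUPi)
      also have "\<dots> \<le> (SUP v\<in>ptL OX. inf (J p v) (inf (subO OX z v) (subO OX w v)))"
      proof (rule SUP_least)
        fix D assume D: "D \<in> Bs"
        have t1: "inf (subO OX z (ptB B)) (subL D B) \<le> subO OX z (ptB D)"
          using e_trans[of z "ptB B" "ptB D"] e_ptB_ptB[OF B D] by simp
        have t2: "inf (subO OX w (ptB C)) (subL D C) \<le> subO OX w (ptB D)"
          using e_trans[of w "ptB C" "ptB D"] e_ptB_ptB[OF C D] by simp
        have "inf (inf (inf (subL D B) (subL D C)) (p D)) (inf (subO OX z (ptB B)) (subO OX w (ptB C)))
            \<le> inf (J p (ptB D)) (inf (subO OX z (ptB D)) (subO OX w (ptB D)))"
          using t1 t2 J_ptB[OF D, of p]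
          by (smt (verit) inf.bounded_iff inf.cobounded1 inf.cobounded2 order_trans)
        thus "inf (inf (inf (subL D B) (subL D C)) (p D)) (inf (subO OX z (ptB B)) (subO OX w (ptB C)))
            \<le> (SUP v\<in>ptL OX. inf (J p v) (inf (subO OX z v) (subO OX w v)))"
          by (rule SUP_upper2[OF ptB_in[OF D]])
      qed
      finally show "inf (inf (p B) (subO OX z (ptB B))) (inf (p C) (subO OX w (ptB C)))
            \<le> (SUP v\<in>ptL OX. inf (J p v) (inf (subO OX z v) (subO OX w v)))" .
    qed
    finally show ?thesis .
  qed
  have low: "lower_set (ptL OX) (subO OX) (J p)"
    unfolding lower_set_def
  proof (intro ballI)
    fix x y assume x: "x \<in> ptL OX" and y: "y \<in> ptL OX"
    have "inf (J p x) (subO OX y x) = (SUP B\<in>Bs. inf (inf (p B) (subO OX x (ptB B))) (subO OX y x))"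
      using x by (simp add: J_def SUPi)
    also have "\<dots> \<le> J p y"
      unfolding J_def using y
    proof (simp, intro SUP_mono bexI)
      fix B assume "B \<in> Bs"
      show "inf (inf (p B) (subO OX x (ptB B))) (subO OX y x) \<le> inf (p B) (subO OX y (ptB B))"
        using e_trans[of y x "ptB B"]
        by (smt (verit) inf.bounded_iff inf.cobounded1 inf.cobounded2 order_trans inf_commute)
    qed
    finally show "inf (J p x) (subO OX y x) \<le> J p y" .
  qed
  show "ideal (ptL OX) (subO OX) (J p)"
    unfolding ideal_def directed_def using dir1 dir2 low by blast
  show "is_sup (ptL OX) (subO OX) (J p) p"
    unfolding is_sup_def
  proof (intro conjI ballI)
    show "p \<in> ptL OX" using p by (simp add: ptL_iff)
  next
    fix y assume y: "y \<in> ptL OX"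
    show "subO OX p y = subP (ptL OX) (J p) (down (subO OX) y)"
    proof (rule eq_by_le)
      fix c :: 'l
      have R: "c \<le> subP (ptL OX) (J p) (down (subO OX) y) \<longleftrightarrow>
          (\<forall>z\<in>ptL OX. \<forall>B\<in>Bs. inf c (inf (p B) (subO OX z (ptB B))) \<le> subO OX z y)"
        by (simp add: subP_ge_iff down_def J_def iSUP SUP_le_iff)
      show "c \<le> subO OX p y \<longleftrightarrow> c \<le> subP (ptL OX) (J p) (down (subO OX) y)"
        unfolding R
      proof (intro iffI ballI)
        fix z B assume c: "c \<le> subO OX p y" and z: "z \<in> ptL OX" and B: "B \<in> Bs"
        have "inf c (p B) \<le> y B" using c e_app[OF Bs_sub[OF B], of p y]
          by (meson inf_mono order_refl order_trans)
        hence "inf c (p B) \<le> subO OX (ptB B) y" using e_ptB[OF B] y by (simp add: ptL_iff)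
        hence "inf c (inf (p B) (subO OX z (ptB B))) \<le> inf (subO OX z (ptB B)) (subO OX (ptB B) y)"
          by (smt (verit) inf.bounded_iff inf.cobounded1 inf.cobounded2 order_trans inf_commute)
        also have "\<dots> \<le> subO OX z y" by (rule e_trans)
        finally show "inf c (inf (p B) (subO OX z (ptB B))) \<le> subO OX z y" .
      next
        assume H: "\<forall>z\<in>ptL OX. \<forall>B\<in>Bs. inf c (inf (p B) (subO OX z (ptB B))) \<le> subO OX z y"
        show "c \<le> subO OX p y" unfolding e_ge_iff
        proof
          fix A assume A: "A \<in> OX"
          have "inf c (p A) = (SUP B\<in>Bs. inf c (inf (subL B A) (p B)))" by (simp add: pt_base[OF p A] iSUP)
          also have "\<dots> \<le> y A"
          proof (rule SUP_least)
            fix B assume B: "B \<in> Bs"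
            have "inf c (inf (p B) (subO OX (ptB B) (ptB B))) \<le> subO OX (ptB B) y"
              using H ptB_in[OF B] B by blast
            hence "inf c (p B) \<le> y B"
              using e_ptB[OF B] y by (simp add: e_refl ptL_iff)
            hence "inf c (inf (subL B A) (p B)) \<le> inf (subL B A) (y B)"
              by (smt (verit) inf.bounded_iff inf.cobounded1 inf.cobounded2 order_trans inf_commute)
            also have "\<dots> \<le> y A" using pt_sub[OF _ A Bs_sub[OF B], of y] y by (simp add: ptL_iff)
            finally show "inf c (inf (subL B A) (p B)) \<le> y A" .
          qed
          finally show "inf c (p A) \<le> y A" .
        qed
      qed
    qed
  qed
qed

lemma compact_J:
  assumes p: "p \<in> compact_elems (ptL OX) (subO OX)"
  shows "J p p = top"
proof -
  have pP: "is_point OX p" using p unfolding compact_elems_def by (simp add: ptL_iff)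
  let ?S = "{(I, s). Lsubset_of (ptL OX) I \<and> ideal (ptL OX) (subO OX) I \<and> is_sup (ptL OX) (subO OX) I s}"
  have mem: "(J p, p) \<in> ?S" using J_props[OF pP] by simp
  have "top = wbelow (ptL OX) (subO OX) p p" using p unfolding compact_elems_def by simp
  also have "\<dots> = (INF (I, s)\<in>?S. himp (subO OX p s) (I p))" unfolding wbelow_def by simp
  also have "\<dots> \<le> himp (subO OX p p) (J p p)"
    using INF_lower[OF mem, of "\<lambda>(I, s). himp (subO OX p s) (I p)"] by simp
  finally have "top \<le> himp (subO OX p p) (J p p)" .
  thus ?thesis by (simp add: e_refl himp_top top_le)
qed

lemma kset_ptB: "B \<in> Bs \<Longrightarrow> is_point OX x \<Longrightarrow> kset (ptL OX) (subO OX) x (ptB B) = x B"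
  unfolding kset_def using ptB_compact e_ptB by simp

lemma kset_dir:
  assumes x: "is_point OX x"
  shows "directed (ptL OX) (subO OX) (kset (ptL OX) (subO OX) x)"
  unfolding directed_def
proof (intro conjI ballI)
  show "(SUP y\<in>ptL OX. kset (ptL OX) (subO OX) x y) = top"
  proof (rule top_le)
    have "top = (SUP B\<in>Bs. x B)" using pt_top[OF x] by simp
    also have "\<dots> \<le> (SUP y\<in>ptL OX. kset (ptL OX) (subO OX) x y)"
      using kset_ptB[OF _ x] ptB_in by (metis SUP_mono order_refl)
    finally show "top \<le> (SUP y\<in>ptL OX. kset (ptL OX) (subO OX) x y)" .
  qed
next
  fix y z assume yP: "y \<in> ptL OX" and zP: "z \<in> ptL OX"
  let ?k = "kset (ptL OX) (subO OX) x"
  let ?R = "(SUP v\<in>ptL OX. inf (?k v) (inf (subO OX y v) (subO OX z v)))"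
  show "inf (?k y) (?k z) \<le> ?R"
  proof (cases "y \<in> compact_elems (ptL OX) (subO OX) \<and> z \<in> compact_elems (ptL OX) (subO OX)")
    case False thus ?thesis by (auto simp: kset_def)
  next
    case True
    have yp: "is_point OX y" and zp: "is_point OX z" using yP zP by (simp_all add: ptL_iff)
    have "inf (?k y) (?k z) = inf (inf (J y y) (J z z)) (inf (subO OX y x) (subO OX z x))"
      using True by (simp add: kset_def compact_J)
    also have "\<dots> = (SUP B\<in>Bs. SUP C\<in>Bs. inf (inf (inf (y B) (subO OX y (ptB B))) (inf (z C) (subO OX z (ptB C)))) (inf (subO OX y x) (subO OX z x)))"
      using yP zP by (simp add: J_def iSUP SUPi) (rule SUP_commute)
    also have "\<dots> \<le> ?R"
    proof (intro SUP_least)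
      fix B C assume B: "B \<in> Bs" and C: "C \<in> Bs"
      have xB: "inf (subO OX y x) (y B) \<le> x B" using e_app[OF Bs_sub[OF B]] .
      have xC: "inf (subO OX z x) (z C) \<le> x C" using e_app[OF Bs_sub[OF C]] .
      have "inf (inf (inf (y B) (subO OX y (ptB B))) (inf (z C) (subO OX z (ptB C)))) (inf (subO OX y x) (subO OX z x))
          \<le> inf (inf (x B) (x C)) (inf (subO OX y (ptB B)) (subO OX z (ptB C)))"
        using xB xC by (smt (verit) inf.bounded_iff inf.cobounded1 inf.cobounded2 order_trans inf_commute)
      also have "\<dots> = (SUP D\<in>Bs. inf (inf (inf (subL D B) (subL D C)) (x D)) (inf (subO OX y (ptB B)) (subO OX z (ptB C))))"
        by (simp add: inf_BC_split[OF x B C] SUPi)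
      also have "\<dots> \<le> ?R"
      proof (rule SUP_least)
        fix D assume D: "D \<in> Bs"
        have t1: "inf (subO OX y (ptB B)) (subL D B) \<le> subO OX y (ptB D)"
          using e_trans[of y "ptB B" "ptB D"] e_ptB_ptB[OF B D] by simp
        have t2: "inf (subO OX z (ptB C)) (subL D C) \<le> subO OX z (ptB D)"
          using e_trans[of z "ptB C" "ptB D"] e_ptB_ptB[OF C D] by simp
        have "inf (inf (inf (subL D B) (subL D C)) (x D)) (inf (subO OX y (ptB B)) (subO OX z (ptB C)))
            \<le> inf (?k (ptB D)) (inf (subO OX y (ptB D)) (subO OX z (ptB D)))"
          using t1 t2 kset_ptB[OF D x]
          by (smt (verit) inf.bounded_iff inf.cobounded1 inf.cobounded2 order_trans)
        thus "inf (inf (inf (subL D B) (subL D C)) (x D)) (inf (subO OX y (ptB B)) (subO OX z (ptB C))) \<le> ?R"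
          by (rule SUP_upper2[OF ptB_in[OF D]])
      qed
      finally show "inf (inf (inf (y B) (subO OX y (ptB B))) (inf (z C) (subO OX z (ptB C)))) (inf (subO OX y x) (subO OX z x)) \<le> ?R" .
    qed
    finally show ?thesis .
  qed
qed

lemma kset_sup:
  assumes x: "is_point OX x"
  shows "is_sup (ptL OX) (subO OX) (kset (ptL OX) (subO OX) x) x"
  unfolding is_sup_def
proof (intro conjI ballI)
  show "x \<in> ptL OX" using x by (simp add: ptL_iff)
next
  fix y assume y: "y \<in> ptL OX"
  show "subO OX x y = subP (ptL OX) (kset (ptL OX) (subO OX) x) (down (subO OX) y)"
  proof (rule eq_by_le)
    fix c :: 'l
    have R: "c \<le> subP (ptL OX) (kset (ptL OX) (subO OX) x) (down (subO OX) y) \<longleftrightarrow>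
        (\<forall>v\<in>compact_elems (ptL OX) (subO OX). inf c (subO OX v x) \<le> subO OX v y)"
      by (auto simp: subP_ge_iff down_def kset_def compact_elems_def)
    show "c \<le> subO OX x y \<longleftrightarrow> c \<le> subP (ptL OX) (kset (ptL OX) (subO OX) x) (down (subO OX) y)"
      unfolding R
    proof (intro iffI ballI)
      fix v assume c: "c \<le> subO OX x y"
      have "inf c (subO OX v x) \<le> inf (subO OX v x) (subO OX x y)"
        using c by (simp add: inf.coboundedI1 inf_commute le_infI2)
      also have "\<dots> \<le> subO OX v y" by (rule e_trans)
      finally show "inf c (subO OX v x) \<le> subO OX v y" .
    next
      assume H: "\<forall>v\<in>compact_elems (ptL OX) (subO OX). inf c (subO OX v x) \<le> subO OX v y"
      show "c \<le> subO OX x y" unfolding e_ge_iff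
      proof
        fix A assume A: "A \<in> OX"
        have "inf c (x A) = (SUP B\<in>Bs. inf c (inf (subL B A) (x B)))" by (simp add: pt_base[OF x A] iSUP)
        also have "\<dots> \<le> y A"
        proof (rule SUP_least)
          fix B assume B: "B \<in> Bs"
          have "inf c (subO OX (ptB B) x) \<le> subO OX (ptB B) y"
            using H ptB_compact[OF B] by blast
          hence "inf c (x B) \<le> y B"
            using e_ptB[OF B] x y by (simp add: ptL_iff)
          hence "inf c (inf (subL B A) (x B)) \<le> inf (subL B A) (y B)"
            by (smt (verit) inf.bounded_iff inf.cobounded1 inf.cobounded2 order_trans inf_commute)
          also have "\<dots> \<le> y A" using pt_sub[OF _ A Bs_sub[OF B], of y] y by (simp add: ptL_iff)
          finally show "inf c (inf (subL B A) (x B)) \<le> y A" .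
        qed
        finally show "inf c (x A) \<le> y A" .
      qed
    qed
  qed
qed

lemma algebraic: "algebraic_L_dcpo (ptL OX) (subO OX)"
  unfolding algebraic_L_dcpo_def using L_dcpo_pt kset_dir kset_sup by (simp add: ptL_iff)

end

theorem theorem5p7:
  fixes OX :: "('x \<Rightarrow> 'l::complete_lattice) set"
  assumes "frame TYPE('l)"
    and "L_topology OX"
    and "strong_locally_super_compact OX"
  shows "algebraic_L_dcpo (ptL OX) (subO OX)"
proof -
  obtain Bs where "is_base OX Bs" "\<forall>B\<in>Bs. super_compact OX B"
    using assms(3) unfolding strong_locally_super_compact_def by blast
  then interpret slsc OX Bs using assms(1,2) by unfold_locales
  show ?thesis by (rule algebraic)
qed

end
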